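(* Let $c_{db}$ be large enough (depending only on $s,d$) so that the following holds: for any chain $Q_0\supset Q_1\supset\dots\supset Q_n$ in $\mathcal D$ with $Q_j$ a child of $Q_{j-1}$ and $Q_j$ not $p$-doubling for $1\le j\le n$, one has $\Theta(Q_j)\le 2^{-j/2}p(Q_0)$ for all $j$. Fix $Q\in\mathcal D$ and let $J\subset\mathcal D$ be a family of cubes contained in $Q$ such that for every $P\in J$, every cube $P'\in\mathcal D$ with $P\subset P'\subset Q$ is not $p$-doubling. Then $$\sigma(J)\le 2\,p(Q)^2\,\mu(Q).$$
   Context: $0<s<d$. $E\subset\mathbb R^d$ is a Cantor set built from a compact $Q^0$ by repeatedly choosing, inside each closed "cube" $Q$ of generation $k$, a finite nonempty family of closed children (the cubes of generation $k+1$), such that each child $Q'$ of $Q$ satisfies $\frac18\ell(Q)\le\ell(Q')\le\frac13\ell(Q)$, where $\ell(Q)=\operatorname{diam}(Q)$, and distinct children of $Q$ are at distance $\ge c_{sep}\ell(Q)$. $\mathcal D$ is the family of all such cubes. $\mu$ is a finite Borel measure supported on $E$ with $\mu(Q)>0$ for all $Q\in\mathcal D$. $\Theta(Q)=\mu(Q)/\ell(Q)^s$, $p(Q)=\sum_{P\in\mathcal D,\,P\supset Q}\frac{\ell(Q)}{\ell(P)}\Theta(P)$, $Q$ is $p$-doubling (with constant $c_{db}$) if $p(Q)\le c_{db}\Theta(Q)$, and for $\mathcal A\subset\mathcal D$, $\sigma(\mathcal A)=\sum_{P\in\mathcal A}\Theta(P)^2\mu(P)$. *)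

theory Defs
  imports "HOL-Analysis.Analysis"
begin

text \<open>Cubes of generation k, built from the initial compact set Q0 by the
  children map ch (ch Q = the finite family of children of the cube Q).\<close>
primrec gen :: "'a set \<Rightarrow> ('a set \<Rightarrow> 'a set set) \<Rightarrow> nat \<Rightarrow> 'a set set" where
  "gen Q0 ch 0 = {Q0}"
| "gen Q0 ch (Suc k) = \<Union> (ch ` gen Q0 ch k)"

definition cubes :: "'a set \<Rightarrow> ('a set \<Rightarrow> 'a set set) \<Rightarrow> 'a set set" where
  "cubes Q0 ch = (\<Union>k. gen Q0 ch k)"

definition cantor_set :: "'a set \<Rightarrow> ('a set \<Rightarrow> 'a set set) \<Rightarrow> 'a set" where
  "cantor_set Q0 ch = (\<Inter>k. \<Union> (gen Q0 ch k))"

text \<open>The standing assumptions on the construction; l(Q) = diameter Q.\<close>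
definition cantor_construction ::
  "('a::euclidean_space) set \<Rightarrow> ('a set \<Rightarrow> 'a set set) \<Rightarrow> real \<Rightarrow> bool" where
  "cantor_construction Q0 ch c_sep \<longleftrightarrow>
     compact Q0 \<and> diameter Q0 > 0 \<and> c_sep > 0 \<and>
     (\<forall>Q\<in>cubes Q0 ch.
        finite (ch Q) \<and> ch Q \<noteq> {} \<and>
        (\<forall>Q'\<in>ch Q. closed Q' \<and> Q' \<subseteq> Q \<and>
            diameter Q / 8 \<le> diameter Q' \<and> diameter Q' \<le> diameter Q / 3) \<and>
        (\<forall>Q1\<in>ch Q. \<forall>Q2\<in>ch Q. Q1 \<noteq> Q2 \<longrightarrow> setdist Q1 Q2 \<ge> c_sep * diameter Q))"

definition Theta :: "'a::euclidean_space measure \<Rightarrow> real \<Rightarrow> 'a set \<Rightarrow> real" where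
  "Theta \<mu> s Q = measure \<mu> Q / diameter Q powr s"

definition pcoef ::
  "'a::euclidean_space set \<Rightarrow> ('a set \<Rightarrow> 'a set set) \<Rightarrow> 'a measure \<Rightarrow> real \<Rightarrow> 'a set \<Rightarrow> real" where
  "pcoef Q0 ch \<mu> s Q = (\<Sum>P\<in>{P\<in>cubes Q0 ch. Q \<subseteq> P}. diameter Q / diameter P * Theta \<mu> s P)"

definition p_doubling ::
  "'a::euclidean_space set \<Rightarrow> ('a set \<Rightarrow> 'a set set) \<Rightarrow> 'a measure \<Rightarrow> real \<Rightarrow> real \<Rightarrow> 'a set \<Rightarrow> bool" where
  "p_doubling Q0 ch \<mu> s c_db Q \<longleftrightarrow> pcoef Q0 ch \<mu> s Q \<le> c_db * Theta \<mu> s Q"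

text \<open>sigma(A) = sum over P in A of Theta(P)^2 mu(P) (possibly infinite family,
  so an unordered sum of nonnegative terms in ennreal).\<close>
definition sigma :: "'a::euclidean_space measure \<Rightarrow> real \<Rightarrow> 'a set set \<Rightarrow> ennreal" where
  "sigma \<mu> s A = (\<Sum>\<^sub>\<infinity>P\<in>A. ennreal ((Theta \<mu> s P)\<^sup>2 * measure \<mu> P))"

end

theory Submission imports Defs begin

lemma gen_cubes: "Q \<in> gen Q0 ch k \<Longrightarrow> Q \<in> cubes Q0 ch"
  unfolding cubes_def by blast

lemma cc_child:
  assumes "cantor_construction Q0 ch c" "A \<in> cubes Q0 ch" "Q \<in> ch A"
  shows "closed Q" "Q \<subseteq> A" "diameter A / 8 \<le> diameter Q" "diameter Q \<le> diameter A / 3"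
  using assms unfolding cantor_construction_def by blast+

lemma gen_props:
  assumes cc: "cantor_construction Q0 ch c"
  shows "Q \<in> gen Q0 ch k \<Longrightarrow> closed Q \<and> Q \<subseteq> Q0 \<and> diameter Q > 0"
proof (induction k arbitrary: Q)
  case 0
  then show ?case using cc unfolding cantor_construction_def by (auto intro: compact_imp_closed)
next
  case (Suc k)
  then obtain A where A: "A \<in> gen Q0 ch k" "Q \<in> ch A" by auto
  have Ac: "A \<in> cubes Q0 ch" using A gen_cubes by blast
  from cc_child[OF cc Ac A(2)] Suc.IH[OF A(1)] show ?case by auto
qed

lemma gen_disj:
  assumes cc: "cantor_construction Q0 ch c"
  shows "A \<in> gen Q0 ch k \<Longrightarrow> B \<in> gen Q0 ch k \<Longrightarrow> A \<noteq> B \<Longrightarrow> A \<inter> B = {}"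
proof (induction k arbitrary: A B)
  case 0
  then show ?case by simp
next
  case (Suc k)
  then obtain A' B' where A: "A' \<in> gen Q0 ch k" "A \<in> ch A'" and B: "B' \<in> gen Q0 ch k" "B \<in> ch B'" by auto
  show ?case
  proof (cases "A' = B'")
    case True
    have Ac: "A' \<in> cubes Q0 ch" using A gen_cubes by blast
    have sd: "\<forall>Q1\<in>ch A'. \<forall>Q2\<in>ch A'. Q1 \<noteq> Q2 \<longrightarrow> setdist Q1 Q2 \<ge> c * diameter A'"
      using cc Ac unfolding cantor_construction_def by blast
    have "setdist A B \<ge> c * diameter A'" using sd A(2) B(2) True Suc.prems(3) by blast
    moreover have "c > 0" using cc unfolding cantor_construction_def by auto
    moreover have "diameter A' > 0" using gen_props[OF cc A(1)] by auto
    ultimately have "setdist A B > 0" by (smt (verit) mult_pos_pos)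
    show ?thesis
    proof (rule ccontr)
      assume "A \<inter> B \<noteq> {}"
      then obtain x where "x \<in> A" "x \<in> B" by blast
      then have "setdist A B \<le> dist x x" by (rule setdist_le_dist)
      then show False using \<open>setdist A B > 0\<close> by simp
    qed
  next
    case False
    have "A \<subseteq> A'" using cc_child(2)[OF cc gen_cubes[OF A(1)] A(2)] .
    moreover have "B \<subseteq> B'" using cc_child(2)[OF cc gen_cubes[OF B(1)] B(2)] .
    ultimately show ?thesis using Suc.IH[OF A(1) B(1) False] by blast
  qed
qed

lemma gen_chain:
  assumes cc: "cantor_construction Q0 ch c"
  shows "P \<in> gen Q0 ch (k + n) \<Longrightarrow> \<exists>Qs. Qs n = P \<and> (\<forall>j\<le>n. Qs j \<in> gen Q0 ch (k + j) \<and> P \<subseteq> Qs j)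
     \<and> (\<forall>j\<in>{1..n}. Qs j \<in> ch (Qs (j - 1))) \<and> (\<forall>i j. i \<le> j \<longrightarrow> j \<le> n \<longrightarrow> Qs j \<subseteq> Qs i)"
proof (induction n arbitrary: P)
  case 0
  then show ?case by (intro exI[of _ "\<lambda>_. P"]) auto
next
  case (Suc n)
  then obtain A where A: "A \<in> gen Q0 ch (k + n)" "P \<in> ch A" by auto
  have PA: "P \<subseteq> A" using cc_child[OF cc _ A(2)] A(1) gen_cubes by blast
  from Suc.IH[OF A(1)] obtain Qs where Qs: "Qs n = A" "\<forall>j\<le>n. Qs j \<in> gen Q0 ch (k + j) \<and> A \<subseteq> Qs j"
     "\<forall>j\<in>{1..n}. Qs j \<in> ch (Qs (j - 1))" "\<forall>i j. i \<le> j \<longrightarrow> j \<le> n \<longrightarrow> Qs j \<subseteq> Qs i" by blast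
  define Qs' where "Qs' = Qs(Suc n := P)"
  have "\<forall>j\<le>Suc n. Qs' j \<in> gen Q0 ch (k + j) \<and> P \<subseteq> Qs' j"
    using Qs(2) Suc.prems PA unfolding Qs'_def by (auto simp: le_Suc_eq)
  moreover have "\<forall>j\<in>{1..Suc n}. Qs' j \<in> ch (Qs' (j - 1))"
    using Qs(1,3) A(2) unfolding Qs'_def by (auto simp: le_Suc_eq)
  moreover have "\<forall>i j. i \<le> j \<longrightarrow> j \<le> Suc n \<longrightarrow> Qs' j \<subseteq> Qs' i"
  proof (intro allI impI)
    fix i j assume ij: "i \<le> j" "j \<le> Suc n"
    show "Qs' j \<subseteq> Qs' i"
    proof (cases "j = Suc n")
      case True
      show ?thesis
      proof (cases "i = Suc n")
        case False
        then have "i \<le> n" using ij by auto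
        then have "Qs n \<subseteq> Qs i" using Qs(4) by blast
        then show ?thesis using True False PA Qs(1) unfolding Qs'_def by auto
      qed (simp add: True)
    next
      case False
      then show ?thesis using ij Qs(4) unfolding Qs'_def by auto
    qed
  qed
  ultimately show ?case by (intro exI[of _ Qs']) (auto simp: Qs'_def)
qed

lemma gen_sub:
  assumes cc: "cantor_construction Q0 ch c"
    and P: "P \<in> gen Q0 ch m" and Q: "Q \<in> gen Q0 ch k" and PQ: "P \<subseteq> Q"
  shows "k \<le> m"
proof (rule ccontr)
  assume "\<not> k \<le> m"
  then have n: "k = m + (k - m)" "k - m \<ge> 1" by auto
  define n where "n = k - m"
  note n = n[folded n_def]
  have Qmn: "Q \<in> gen Q0 ch (m + n)" using Q n by simp
  from gen_chain[OF cc Qmn] obtain Qs where Qs: "Qs n = Q" "\<forall>j\<le>n. Qs j \<in> gen Q0 ch (m + j) \<and> Q \<subseteq> Qs j"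
     "\<forall>j\<in>{1..n}. Qs j \<in> ch (Qs (j - 1))" "\<forall>i j. i \<le> j \<longrightarrow> j \<le> n \<longrightarrow> Qs j \<subseteq> Qs i" by blast
  have Pne: "P \<noteq> {}" using gen_props[OF cc P] by auto
  have "Qs 0 \<in> gen Q0 ch m" "Q \<subseteq> Qs 0" using Qs(2) by auto
  then have "Qs 0 = P" using gen_disj[OF cc _ P] Pne PQ by blast
  have ch1: "Q \<in> ch (Qs (n - 1))" using Qs(1,3) n by (metis atLeastAtMost_iff order_refl)
  have g1: "Qs (n - 1) \<in> gen Q0 ch (m + (n - 1))" using Qs(2) by auto
  have "diameter Q \<le> diameter (Qs (n - 1)) / 3"
    using cc_child[OF cc gen_cubes[OF g1] ch1] by simp
  moreover have "Qs (n - 1) \<subseteq> Q"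
  proof -
    have "Qs (n - 1) \<subseteq> Qs 0" using Qs(4) by simp
    then show ?thesis using \<open>Qs 0 = P\<close> PQ by simp
  qed
  moreover have "bounded Q" using gen_props[OF cc Q] cc unfolding cantor_construction_def
    by (meson bounded_subset compact_imp_bounded)
  ultimately have "diameter Q \<le> diameter Q / 3" using diameter_subset[of "Qs (n - 1)" Q] by linarith
  moreover have "diameter Q > 0" using gen_props[OF cc Q] by auto
  ultimately show False by simp
qed

lemma sum_disj_le:
  assumes fm: "finite_measure M" and sb: "sets M = sets borel" and S: "finite S"
    and sub: "\<forall>P\<in>S. closed P \<and> P \<subseteq> Q" and cQ: "closed Q"
    and dj: "\<forall>A\<in>S. \<forall>B\<in>S. A \<noteq> B \<longrightarrow> A \<inter> B = {}"
  shows "(\<Sum>P\<in>S. measure M P) \<le> measure M Q"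
proof -
  interpret finite_measure M by fact
  have "measure M (\<Union>P\<in>S. id P) = (\<Sum>P\<in>S. measure M (id P))"
    by (rule finite_measure_finite_Union) (use S sub sb dj in \<open>auto simp: disjoint_family_on_def\<close>)
  moreover have "measure M (\<Union>P\<in>S. id P) \<le> measure M Q"
    by (rule finite_measure_mono) (use sub cQ sb in auto)
  ultimately show ?thesis by simp
qed

lemma geom_le2: "finite (N::nat set) \<Longrightarrow> (\<Sum>n\<in>N. (1/2::real)^n) \<le> 2"
proof -
  assume "finite N"
  have "(\<Sum>n\<in>N. (1/2::real)^n) \<le> (\<Sum>n. (1/2::real)^n)"
    by (rule sum_le_suminf) (use \<open>finite N\<close> in auto)
  also have "\<dots> = 2" by (subst suminf_geometric) auto
  finally show ?thesis .
qed

lemma pow_half: "(2 powr (- real n / 2))\<^sup>2 = (1/2::real)^n"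
proof -
  have "(2 powr (- real n / 2))\<^sup>2 = 2 powr (- real n / 2) * 2 powr (- real n / 2)" by (simp add: power2_eq_square)
  also have "\<dots> = 2 powr (- real n)" by (simp add: powr_add[symmetric])
  also have "\<dots> = (1/2)^n" by (simp add: powr_minus powr_realpow power_divide inverse_eq_divide)
  finally show ?thesis .
qed

theorem lemma2p2:
  fixes Q0 :: "(real ^ 'd) set"
    and ch :: "(real ^ 'd) set \<Rightarrow> (real ^ 'd) set set"
    and c_sep s c_db :: real
    and \<mu> :: "(real ^ 'd) measure"
    and Q :: "(real ^ 'd) set"
    and J :: "(real ^ 'd) set set"
  assumes s_pos: "0 < s" and s_lt_d: "s < real CARD('d)"
    and constr: "cantor_construction Q0 ch c_sep"
    and borel: "sets \<mu> = sets borel"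
    and finite: "finite_measure \<mu>"
    and supp: "emeasure \<mu> (UNIV - cantor_set Q0 ch) = 0"
    and pos: "\<forall>P\<in>cubes Q0 ch. emeasure \<mu> P > 0"
    and chain: "\<forall>(n::nat) (Qs :: nat \<Rightarrow> (real ^ 'd) set).
       Qs 0 \<in> cubes Q0 ch \<and>
       (\<forall>j\<in>{1..n}. Qs j \<in> ch (Qs (j - 1)) \<and> \<not> p_doubling Q0 ch \<mu> s c_db (Qs j))
       \<longrightarrow> (\<forall>j\<le>n. Theta \<mu> s (Qs j) \<le> 2 powr (- real j / 2) * pcoef Q0 ch \<mu> s (Qs 0))"
    and Q: "Q \<in> cubes Q0 ch"
    and J_sub: "J \<subseteq> cubes Q0 ch"
    and J_in_Q: "\<forall>P\<in>J. P \<subseteq> Q"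
    and J_nd: "\<forall>P\<in>J. \<forall>P'\<in>cubes Q0 ch. P \<subseteq> P' \<and> P' \<subseteq> Q \<longrightarrow> \<not> p_doubling Q0 ch \<mu> s c_db P'"
  shows "sigma \<mu> s J \<le> ennreal (2 * (pcoef Q0 ch \<mu> s Q)\<^sup>2 * measure \<mu> Q)"
proof -
  have cc: "cantor_construction Q0 ch c_sep" by (rule constr)
  obtain k where Qk: "Q \<in> gen Q0 ch k" using Q unfolding cubes_def by blast
  define g where "g P = (SOME m. P \<in> gen Q0 ch m)" for P
  have gP: "P \<in> gen Q0 ch (g P)" if "P \<in> cubes Q0 ch" for P
  proof -
    from that obtain m where "P \<in> gen Q0 ch m" unfolding cubes_def by blast
    then show ?thesis unfolding g_def by (rule someI)
  qed
  define nn where "nn P = g P - k" for P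
  define pQ where "pQ = pcoef Q0 ch \<mu> s Q"
  have Th0: "Theta \<mu> s P \<ge> 0" for P unfolding Theta_def by simp
  have key: "Theta \<mu> s P \<le> 2 powr (- real (nn P) / 2) * pQ" if PJ: "P \<in> J" for P
  proof -
    have Pg: "P \<in> gen Q0 ch (g P)" using gP J_sub PJ by blast
    have kg: "k \<le> g P" using gen_sub[OF cc Pg Qk] J_in_Q PJ by simp
    then have "P \<in> gen Q0 ch (k + nn P)" using Pg unfolding nn_def by simp
    from gen_chain[OF cc this] obtain Qs where Qs: "Qs (nn P) = P" "\<forall>j\<le>nn P. Qs j \<in> gen Q0 ch (k + j) \<and> P \<subseteq> Qs j"
     "\<forall>j\<in>{1..nn P}. Qs j \<in> ch (Qs (j - 1))" "\<forall>i j. i \<le> j \<longrightarrow> j \<le> nn P \<longrightarrow> Qs j \<subseteq> Qs i" by blast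
    have Pne: "P \<noteq> {}" using gen_props[OF cc Pg] by auto
    have "Qs 0 \<in> gen Q0 ch k" "P \<subseteq> Qs 0" using Qs(2) by auto
    moreover have "P \<subseteq> Q" using J_in_Q PJ by simp
    ultimately have "Qs 0 \<inter> Q \<noteq> {}" using Pne by blast
    then have Q0eq: "Qs 0 = Q" using gen_disj[OF cc \<open>Qs 0 \<in> gen Q0 ch k\<close> Qk] by blast
    have "\<forall>j\<in>{1..nn P}. Qs j \<in> ch (Qs (j - 1)) \<and> \<not> p_doubling Q0 ch \<mu> s c_db (Qs j)"
    proof
      fix j assume j: "j \<in> {1..nn P}"
      have jn: "j \<le> nn P" using j by simp
      have c1: "Qs j \<in> cubes Q0 ch" using Qs(2) jn gen_cubes by blast
      have c2: "P \<subseteq> Qs j" using Qs(2) jn by blast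
      have c3: "Qs j \<subseteq> Q" using Qs(4) jn Q0eq by (metis le0)
      have "\<not> p_doubling Q0 ch \<mu> s c_db (Qs j)" using J_nd PJ c1 c2 c3 by blast
      then show "Qs j \<in> ch (Qs (j - 1)) \<and> \<not> p_doubling Q0 ch \<mu> s c_db (Qs j)"
        using Qs(3) j by blast
    qed
    then have "\<forall>j\<le>nn P. Theta \<mu> s (Qs j) \<le> 2 powr (- real j / 2) * pcoef Q0 ch \<mu> s (Qs 0)"
      using chain[rule_format, of Qs "nn P"] Q Q0eq by simp
    then show ?thesis using Qs(1) Q0eq unfolding pQ_def by auto
  qed
  have key2: "(Theta \<mu> s P)\<^sup>2 * measure \<mu> P \<le> (1/2)^(nn P) * (pQ\<^sup>2 * measure \<mu> P)" if PJ: "P \<in> J" for P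
  proof -
    have "(Theta \<mu> s P)\<^sup>2 \<le> (2 powr (- real (nn P) / 2) * pQ)\<^sup>2"
      using key[OF PJ] Th0 by (intro power_mono) auto
    also have "\<dots> = (1/2)^(nn P) * pQ\<^sup>2" using pow_half[of "nn P"] by (simp add: power_mult_distrib)
    finally have "(Theta \<mu> s P)\<^sup>2 * measure \<mu> P \<le> (1/2)^(nn P) * pQ\<^sup>2 * measure \<mu> P"
      by (rule mult_right_mono) simp
    then show ?thesis by (simp add: mult.assoc)
  qed
  have fin: "(\<Sum>P\<in>F. (Theta \<mu> s P)\<^sup>2 * measure \<mu> P) \<le> 2 * pQ\<^sup>2 * measure \<mu> Q"
    if F: "finite F" "F \<subseteq> J" for F
  proof -
    have "(\<Sum>P\<in>F. (Theta \<mu> s P)\<^sup>2 * measure \<mu> P) \<le> (\<Sum>P\<in>F. (1/2)^(nn P) * (pQ\<^sup>2 * measure \<mu> P))"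
      using key2 F by (intro sum_mono) auto
    also have "\<dots> = (\<Sum>n\<in>nn ` F. \<Sum>P\<in>{P\<in>F. nn P = n}. (1/2)^(nn P) * (pQ\<^sup>2 * measure \<mu> P))"
      by (rule sum.group[symmetric]) (use F in auto)
    also have "\<dots> = (\<Sum>n\<in>nn ` F. (1/2)^n * pQ\<^sup>2 * (\<Sum>P\<in>{P\<in>F. nn P = n}. measure \<mu> P))"
      by (intro sum.cong refl) (auto simp: sum_distrib_left mult.assoc)
    also have "\<dots> \<le> (\<Sum>n\<in>nn ` F. (1/2)^n * pQ\<^sup>2 * measure \<mu> Q)"
    proof (intro sum_mono mult_left_mono)
      fix n assume "n \<in> nn ` F"
      show "0 \<le> (1/2::real)^n * pQ\<^sup>2" by simp
      let ?S = "{P\<in>F. nn P = n}"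
      have Sg: "\<forall>P\<in>?S. P \<in> gen Q0 ch (k + n)"
      proof
        fix P assume P: "P \<in> ?S"
        then have "P \<in> J" using F by auto
        then have "P \<in> gen Q0 ch (g P)" using gP J_sub by blast
        moreover have "k \<le> g P" using gen_sub[OF cc \<open>P \<in> gen Q0 ch (g P)\<close> Qk] J_in_Q \<open>P \<in> J\<close> by simp
        ultimately show "P \<in> gen Q0 ch (k + n)" using P unfolding nn_def by auto
      qed
      show "(\<Sum>P\<in>?S. measure \<mu> P) \<le> measure \<mu> Q"
      proof (rule sum_disj_le[OF finite borel])
        show "finite ?S" using F by auto
        show "\<forall>P\<in>?S. closed P \<and> P \<subseteq> Q"
        proof
          fix P assume "P \<in> ?S"
          then show "closed P \<and> P \<subseteq> Q" using Sg gen_props[OF cc, of P] J_in_Q F by auto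
        qed
        show "closed Q" using gen_props[OF cc Qk] by blast
        show "\<forall>A\<in>?S. \<forall>B\<in>?S. A \<noteq> B \<longrightarrow> A \<inter> B = {}"
          using Sg gen_disj[OF cc, of _ "k + n"] by metis
      qed
    qed
    also have "\<dots> = (\<Sum>n\<in>nn ` F. (1/2::real)^n) * (pQ\<^sup>2 * measure \<mu> Q)"
      by (simp add: sum_distrib_right mult.assoc)
    also have "\<dots> \<le> 2 * (pQ\<^sup>2 * measure \<mu> Q)"
      by (rule mult_right_mono) (use geom_le2 F in auto)
    finally show ?thesis by simp
  qed
  have "sigma \<mu> s J \<le> ennreal (2 * pQ\<^sup>2 * measure \<mu> Q)"
    unfolding sigma_def
  proof (rule infsum_le_finite_sums)
    show "(\<lambda>P. ennreal ((Theta \<mu> s P)\<^sup>2 * measure \<mu> P)) summable_on J"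
      by (rule nonneg_summable_on_complete) simp
    fix F assume F: "finite F" "F \<subseteq> J"
    have "(\<Sum>P\<in>F. ennreal ((Theta \<mu> s P)\<^sup>2 * measure \<mu> P)) = ennreal (\<Sum>P\<in>F. (Theta \<mu> s P)\<^sup>2 * measure \<mu> P)"
      by (rule sum_ennreal) simp
    also have "\<dots> \<le> ennreal (2 * pQ\<^sup>2 * measure \<mu> Q)" using fin[OF F] by (rule ennreal_leI)
    finally show "(\<Sum>P\<in>F. ennreal ((Theta \<mu> s P)\<^sup>2 * measure \<mu> P)) \<le> ennreal (2 * pQ\<^sup>2 * measure \<mu> Q)" .
  qed
  then show ?thesis unfolding pQ_def .
qed

end
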